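(* A ring $R$ is strongly nil-clean if, and only if, $R$ is GWNC and $R$ is a UU ring.
   Context: All rings are associative with identity. For a ring $S$, $U(S)$, ${\rm Nil}(S)$, ${\rm Id}(S)$ denote units, nilpotents, idempotents. $S$ is GWNC if every $a\in S\setminus U(S)$ can be written as $a=q+e$ or $a=q-e$ with $q\in{\rm Nil}(S)$, $e\in{\rm Id}(S)$. $R$ is strongly nil-clean if every element is $e+b$ with $e$ idempotent, $b$ nilpotent and $eb=be$. $R$ is UU if $U(R)\subseteq 1+{\rm Nil}(R)$. *)

theory Defs
  imports Main
begin

definition is_unit_r :: "'a::ring_1 \<Rightarrow> bool" where
  "is_unit_r a \<longleftrightarrow> (\<exists>b. a * b = 1 \<and> b * a = 1)"

definition nilpotent_r :: "'a::ring_1 \<Rightarrow> bool" where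
  "nilpotent_r a \<longleftrightarrow> (\<exists>n::nat. a ^ n = 0)"

definition idempotent_r :: "'a::ring_1 \<Rightarrow> bool" where
  "idempotent_r e \<longleftrightarrow> e * e = e"

definition GWNC :: "'a::ring_1 itself \<Rightarrow> bool" where
  "GWNC _ \<longleftrightarrow> (\<forall>a::'a. \<not> is_unit_r a \<longrightarrow>
      (\<exists>q e. nilpotent_r q \<and> idempotent_r e \<and> (a = q + e \<or> a = q - e)))"

definition strongly_nil_clean :: "'a::ring_1 itself \<Rightarrow> bool" where
  "strongly_nil_clean _ \<longleftrightarrow> (\<forall>a::'a. \<exists>e b. idempotent_r e \<and> nilpotent_r b \<and>
      a = e + b \<and> e * b = b * e)"

definition UU_ring :: "'a::ring_1 itself \<Rightarrow> bool" where
  "UU_ring _ \<longleftrightarrow> (\<forall>u::'a. is_unit_r u \<longrightarrow> nilpotent_r (u - 1))"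

end

theory Submission
  imports Defs
begin

lemma pow_swap: "((y::'a::ring_1)*x)^(Suc n) = y * (x*y)^n * x"
  by (induction n) (simp_all add: mult.assoc)

lemma nil_swap: "nilpotent_r ((x::'a::ring_1)*y) \<Longrightarrow> nilpotent_r (y*x)"
  unfolding nilpotent_r_def by (metis pow_swap mult_zero_left mult_zero_right)

lemma comm_pow: "(a::'a::ring_1)*b = b*a \<Longrightarrow> a^n*b = b*a^n"
  by (induction n) (simp_all, metis mult.assoc)

lemma comm_pow_mult: "(a::'a::ring_1)*b = b*a \<Longrightarrow> (a*b)^n = a^n*b^n"
proof (induction n)
  case (Suc n)
  have "(a*b)^Suc n = a*b*(a^n*b^n)" using Suc by simp
  also have "\<dots> = a*(b*a^n)*b^n" by (simp add: mult.assoc)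
  also have "\<dots> = a*(a^n*b)*b^n" using comm_pow[OF Suc.prems] by simp
  finally show ?case by (simp add: mult.assoc)
qed simp

lemma nil_comm_mult: "(a::'a::ring_1)*b = b*a \<Longrightarrow> nilpotent_r a \<Longrightarrow> nilpotent_r (a*b)"
proof -
  assume c: "a*b = b*a" and "nilpotent_r a"
  then obtain n where "a^n = 0" unfolding nilpotent_r_def by blast
  then have "(a*b)^n = 0" using comm_pow_mult[OF c, of n] by simp
  then show ?thesis unfolding nilpotent_r_def by blast
qed

lemma geo1: "(1 - (x::'a::ring_1)) * (\<Sum>i<n. x^i) = 1 - x^n"
proof (induction n)
  case (Suc n)
  have "(1-x)*(\<Sum>i<Suc n. x^i) = (1-x)*(\<Sum>i<n. x^i) + (1-x)*x^n" by (simp add: distrib_left)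
  also have "\<dots> = 1 - x^n + (x^n - x*x^n)" using Suc by (simp add: left_diff_distrib)
  finally show ?case by simp
qed simp

lemma geo2: "(\<Sum>i<n. x^i) * (1 - (x::'a::ring_1)) = 1 - x^n"
proof -
  have c: "(\<Sum>i<n. x^i) * x = x * (\<Sum>i<n. x^i)"
    by (simp add: sum_distrib_left sum_distrib_right power_commutes)
  have "(\<Sum>i<n. x^i) * (1 - x) = (\<Sum>i<n. x^i) - (\<Sum>i<n. x^i) * x" by (simp add: right_diff_distrib)
  also have "\<dots> = (1 - x) * (\<Sum>i<n. x^i)" using c by (simp add: left_diff_distrib)
  finally show ?thesis using geo1 by simp
qed

lemma one_minus_unit: "(y::'a::ring_1)^n = 0 \<Longrightarrow> is_unit_r (1 - y)"
proof -
  assume m: "y^n = 0"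
  have h1: "(1-y)*(\<Sum>i<n. y^i) = 1" using geo1[of y n] m by (simp only: diff_zero)
  have h2: "(\<Sum>i<n. y^i)*(1-y) = 1" using geo2[of y n] m by (simp only: diff_zero)
  show ?thesis unfolding is_unit_r_def using h1 h2 by blast
qed

lemma one_plus_nil_unit: "nilpotent_r (x::'a::ring_1) \<Longrightarrow> is_unit_r (1 + x)"
proof -
  assume "nilpotent_r x"
  then obtain n where n: "x^n = 0" unfolding nilpotent_r_def by blast
  have m: "(-x)^n = 0" using n power_minus[of x n] by (simp only: mult_zero_right)
  have "1 + x = 1 - (-x)" by simp
  then show ?thesis using one_minus_unit[OF m] by metis
qed

lemma nil_uminus: "nilpotent_r (x::'a::ring_1) \<Longrightarrow> nilpotent_r (-x)"
proof -
  assume "nilpotent_r x"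
  then obtain n where n: "x^n = 0" unfolding nilpotent_r_def by blast
  have "(-x)^n = 0" using n power_minus[of x n] by (simp only: mult_zero_right)
  then show ?thesis unfolding nilpotent_r_def by blast
qed

lemma unit_mult: "is_unit_r (a::'a::ring_1) \<Longrightarrow> is_unit_r b \<Longrightarrow> is_unit_r (a*b)"
  unfolding is_unit_r_def
proof (elim exE conjE)
  fix a' b' assume h: "a*a' = 1" "a'*a = 1" "b*b' = 1" "b'*b = 1"
  have "a*b*(b'*a') = a*(b*b')*a'" by (simp add: mult.assoc)
  then have "a*b*(b'*a') = 1" using h by simp
  moreover have "(b'*a')*(a*b) = b'*(a'*a)*b" by (simp add: mult.assoc)
  then have "(b'*a')*(a*b) = 1" using h by simp
  ultimately show "\<exists>c. a*b*c = 1 \<and> c*(a*b) = 1" by blast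
qed


lemma UU_nil: "UU_ring TYPE('a::ring_1) \<Longrightarrow> is_unit_r (u::'a) \<Longrightarrow> nilpotent_r (u - 1)"
  unfolding UU_ring_def by blast

lemma inv_comm: "(a::'a::ring_1)*w = 1 \<Longrightarrow> w*a = 1 \<Longrightarrow> a*z = z*a \<Longrightarrow> w*z = z*w"
proof -
  assume h: "a*w = 1" "w*a = 1" "a*z = z*a"
  have "w*z = w*z*(a*w)" using h by simp
  also have "\<dots> = w*(z*a)*w" by (simp add: mult.assoc)
  also have "\<dots> = w*(a*z)*w" using h by simp
  also have "\<dots> = (w*a)*z*w" by (simp add: mult.assoc)
  finally show ?thesis using h by simp
qed

lemma sqzero_nil: "(x::'a::ring_1)*x = 0 \<Longrightarrow> nilpotent_r x"
  unfolding nilpotent_r_def by (rule exI[of _ 2]) (simp add: power2_eq_square)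

lemma lemA:
  assumes uu: "UU_ring TYPE('a::ring_1)" and hx: "(x::'a)*x = 0" and hy: "y*y = 0"
  shows "nilpotent_r (x*y)"
proof -
  have hx': "x*(x*z) = 0" for z by (simp add: mult.assoc[symmetric] hx)
  have hy': "y*(y*z) = 0" for z by (simp add: mult.assoc[symmetric] hy)
  define Z where "Z = x + y + x*y"
  define D where "D = x*y + y*x"
  have "(1+x)*(1+y) = 1 + Z" unfolding Z_def by (simp add: algebra_simps)
  moreover have "is_unit_r ((1+x)*(1+y))"
    using unit_mult one_plus_nil_unit sqzero_nil hx hy by blast
  ultimately have "is_unit_r (1+Z)" by simp
  then have nZ: "nilpotent_r Z" using UU_nil[OF uu, of "1+Z"] by simp
  from \<open>is_unit_r (1+Z)\<close> obtain W where W: "(1+Z)*W = 1" "W*(1+Z) = 1"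
    unfolding is_unit_r_def by blast
  have Z2: "Z*Z = D*(1+Z)" unfolding Z_def D_def by (simp add: algebra_simps hx hy hx' hy')
  have DZ: "D*Z = Z*D" unfolding Z_def D_def by (simp add: algebra_simps hx hy hx' hy')
  have WZ: "W*Z = Z*W" using inv_comm[OF W, of Z] by (simp add: algebra_simps)
  have "D = D*((1+Z)*W)" using W by simp
  also have "\<dots> = Z*Z*W" using Z2 by (simp add: mult.assoc)
  finally have DW: "D = Z*Z*W" .
  have "(Z*Z)*W = W*(Z*Z)" using WZ by (metis mult.assoc)
  moreover have "nilpotent_r (Z*Z)" using nil_comm_mult[of Z Z] nZ by simp
  ultimately have nD: "nilpotent_r D" using nil_comm_mult DW by metis
  then obtain n where n: "D^n = 0" unfolding nilpotent_r_def by blast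
  have xyD: "x*y*D = (x*y)^2" unfolding D_def by (simp add: algebra_simps power2_eq_square hy')
  have "x*y*D^k = (x*y)^(Suc k)" for k
  proof (induction k)
    case (Suc k)
    have "x*y*D^Suc k = x*y*(D^k*D)" by (simp add: power_commutes)
    also have "\<dots> = (x*y)^(Suc k) * D" using Suc by (simp add: mult.assoc[symmetric])
    also have "\<dots> = (x*y)^k * (x*y*D)" by (simp only: power_Suc2 mult.assoc)
    also have "\<dots> = (x*y)^k * ((x*y)*(x*y))" using xyD by (simp add: power2_eq_square)
    also have "\<dots> = (x*y)^(Suc (Suc k))" by (simp only: power_Suc2 mult.assoc)
    finally show ?case .
  qed simp
  then have "(x*y)^(Suc n) = 0" using n by (metis mult_zero_right)
  then show ?thesis unfolding nilpotent_r_def by blast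
qed


definition Jr :: "'a::ring_1 set" where
  "Jr = {j. \<forall>r. nilpotent_r (r*j)}"

lemma J_zero: "0 \<in> Jr"
  unfolding Jr_def nilpotent_r_def by (auto intro: exI[of _ 1])

lemma J_nil: "j \<in> Jr \<Longrightarrow> nilpotent_r j"
  unfolding Jr_def using mult_1_left by (metis mem_Collect_eq)

lemma J_add:
  assumes uu: "UU_ring TYPE('a::ring_1)" and "(j1::'a) \<in> Jr" "j2 \<in> Jr"
  shows "j1 + j2 \<in> Jr"
  unfolding Jr_def
proof (intro CollectI allI)
  fix r :: 'a
  have "is_unit_r (1 + r*j1)" using assms one_plus_nil_unit unfolding Jr_def by blast
  then obtain v where v: "(1 + r*j1)*v = 1" unfolding is_unit_r_def by blast
  have "nilpotent_r ((v*r)*j2)" using assms unfolding Jr_def by blast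
  then have "is_unit_r ((1 + r*j1)*(1 + v*r*j2))" using unit_mult one_plus_nil_unit
      \<open>is_unit_r (1 + r*j1)\<close> by blast
  moreover have "(1 + r*j1)*(1 + v*r*j2) = 1 + r*(j1+j2)"
  proof -
    have "(1 + r*j1)*(1 + v*r*j2) = (1 + r*j1) + ((1 + r*j1)*v)*(r*j2)"
      by (simp add: algebra_simps)
    also have "\<dots> = 1 + r*(j1+j2)" using v by (simp add: distrib_left)
    finally show ?thesis .
  qed
  ultimately show "nilpotent_r (r*(j1+j2))" using UU_nil[OF uu, of "1 + r*(j1+j2)"] by simp
qed

lemma J_uminus: "(j::'a::ring_1) \<in> Jr \<Longrightarrow> -j \<in> Jr"
  unfolding Jr_def
proof (intro CollectI allI)
  fix r assume "j \<in> {j. \<forall>r. nilpotent_r (r * j)}"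
  then have "nilpotent_r ((-r)*j)" by blast
  then show "nilpotent_r (r*(-j))" by simp
qed

lemma J_diff: "UU_ring TYPE('a::ring_1) \<Longrightarrow> (j1::'a) \<in> Jr \<Longrightarrow> j2 \<in> Jr \<Longrightarrow> j1 - j2 \<in> Jr"
proof -
  assume a: "UU_ring TYPE('a::ring_1)" "(j1::'a) \<in> Jr" "j2 \<in> Jr"
  have "j1 + (-j2) \<in> Jr" using J_add[OF a(1) a(2) J_uminus[OF a(3)]] .
  then show ?thesis by (simp only: diff_conv_add_uminus)
qed

lemma J_left: "(j::'a::ring_1) \<in> Jr \<Longrightarrow> s*j \<in> Jr"
  unfolding Jr_def
proof (intro CollectI allI)
  fix r assume "j \<in> {j. \<forall>r. nilpotent_r (r * j)}"
  then have "nilpotent_r ((r*s)*j)" by blast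
  then show "nilpotent_r (r*(s*j))" by (simp only: mult.assoc)
qed

lemma J_right: "(j::'a::ring_1) \<in> Jr \<Longrightarrow> j*s \<in> Jr"
  unfolding Jr_def
proof (intro CollectI allI)
  fix r assume "j \<in> {j. \<forall>r. nilpotent_r (r * j)}"
  then have "nilpotent_r ((s*r)*j)" by blast
  then have "nilpotent_r (s*(r*j))" by (simp only: mult.assoc)
  then have "nilpotent_r ((r*j)*s)" by (rule nil_swap)
  then show "nilpotent_r (r*(j*s))" by (simp only: mult.assoc)
qed

lemma J_pow_add:
  assumes uu: "UU_ring TYPE('a::ring_1)" and c: "(c::'a) \<in> Jr"
  shows "(p+c)^n - p^n \<in> Jr"
proof (induction n)
  case 0 then show ?case using J_zero by simp
next
  case (Suc n)
  define j where "j = (p+c)^n - p^n"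
  have "(p+c)^Suc n - p^Suc n = (p+c)*(p^n + j) - p*p^n" unfolding j_def by simp
  also have "\<dots> = p*j + (c*p^n + c*j)" by (simp add: algebra_simps)
  finally show ?case using Suc J_add[OF uu] J_left c J_right unfolding j_def[symmetric] by metis
qed

lemma J_comm_pow1:
  assumes uu: "UU_ring TYPE('a::ring_1)" and c: "(u::'a)*v - v*u \<in> Jr"
  shows "v^n*u - u*v^n \<in> Jr"
proof (induction n)
  case 0 then show ?case using J_zero by simp
next
  case (Suc n)
  have "v^Suc n*u - u*v^Suc n = v*(v^n*u - u*v^n) + (- (u*v - v*u))*v^n"
    by (simp add: algebra_simps)
  then show ?case using Suc J_add[OF uu] J_left J_right J_uminus c by metis
qed

lemma J_comm_pow:
  assumes uu: "UU_ring TYPE('a::ring_1)" and c: "(u::'a)*v - v*u \<in> Jr"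
  shows "(u*v)^n - u^n*v^n \<in> Jr"
proof (induction n)
  case 0 then show ?case using J_zero by simp
next
  case (Suc n)
  define j where "j = (u*v)^n - u^n*v^n"
  have c2: "v*u - u*v \<in> Jr" using J_uminus[OF c] by simp
  have k: "u^n*v - v*u^n \<in> Jr" using J_comm_pow1[OF uu c2] .
  have "(u*v)^Suc n - u^Suc n*v^Suc n = u*v*(u^n*v^n + j) - u*u^n*(v*v^n)"
    unfolding j_def by simp
  also have "\<dots> = u*v*j + u*(- (u^n*v - v*u^n))*v^n"
    by (simp add: algebra_simps)
  finally show ?case using Suc J_add[OF uu] J_left J_right J_uminus k unfolding j_def[symmetric]
    by metis
qed


lemma lemB:
  assumes uu: "UU_ring TYPE('a::ring_1)" and e: "(e::'a)*e = e"
  shows "e*r*(1-e) \<in> Jr"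
  unfolding Jr_def
proof (intro CollectI allI)
  fix s :: 'a
  have fe: "(1-e)*(e*z) = 0" for z by (simp add: mult.assoc[symmetric] algebra_simps e)
  have ef: "e*((1-e)*z) = 0" for z by (simp add: mult.assoc[symmetric] algebra_simps e)
  have ee: "e*(e*z) = e*z" for z by (simp add: mult.assoc[symmetric] e)
  have ff: "(1-e)*((1-e)*z) = (1-e)*z" for z by (simp add: mult.assoc[symmetric] algebra_simps e)
  define x where "x = e*r*(1-e)"
  define y where "y = (1-e)*s*e"
  have "x*x = 0" unfolding x_def by (simp add: mult.assoc fe)
  moreover have "y*y = 0" unfolding y_def by (simp add: mult.assoc ef)
  ultimately have "nilpotent_r (x*y)" using lemA[OF uu] by blast
  then have "nilpotent_r (y*x)" by (rule nil_swap)
  moreover have "y*x = ((1-e)*s)*x" unfolding x_def y_def by (simp add: mult.assoc ee)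
  ultimately have "nilpotent_r (x*((1-e)*s))" using nil_swap by metis
  moreover have "x*((1-e)*s) = x*s" unfolding x_def by (simp add: mult.assoc ff)
  ultimately have "nilpotent_r (x*s)" by simp
  then show "nilpotent_r (s*(e*r*(1-e)))" using nil_swap unfolding x_def by blast
qed

lemma lem_comm:
  assumes uu: "UU_ring TYPE('a::ring_1)" and e: "(e::'a)*e = e"
  shows "e*r - r*e \<in> Jr"
proof -
  have e': "(1-e)*(1-e) = 1-e" using e by (simp add: algebra_simps)
  have "e*r - r*e = e*r*(1-e) - (1-e)*r*(1-(1-e))" by (simp add: algebra_simps)
  then show ?thesis using J_diff[OF uu lemB[OF uu e] lemB[OF uu e']] by simp
qed

lemma two_nil:
  assumes uu: "UU_ring TYPE('a::ring_1)"
  shows "nilpotent_r (2::'a)"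
proof -
  have "is_unit_r (-1::'a)" unfolding is_unit_r_def by (rule exI[of _ "-1"]) simp
  then have "nilpotent_r (-1 - 1::'a)" using UU_nil[OF uu] by blast
  then obtain n where "(-2::'a)^n = 0" unfolding nilpotent_r_def by auto
  then have "(- (-2::'a))^n = 0" using power_minus[of "-2::'a" n] by (simp only: mult_zero_right)
  then have "(2::'a)^n = 0" by (simp only: minus_minus)
  then show ?thesis unfolding nilpotent_r_def by blast
qed

lemma two_J:
  assumes uu: "UU_ring TYPE('a::ring_1)"
  shows "2*(e::'a) \<in> Jr"
  unfolding Jr_def
proof (intro CollectI allI)
  fix r :: 'a
  have c: "2*(r*e) = (r*e)*2" using mult_of_nat_commute[of 2 "r*e"] by simp
  have "r*(2*e) = 2*(r*e)" using mult_of_nat_commute[of 2 r] by (simp add: mult.assoc[symmetric])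
  then show "nilpotent_r (r*(2*e))" using nil_comm_mult[OF c two_nil[OF uu]] by simp
qed

lemma J_nilpow: "(x::'a::ring_1)^m \<in> Jr \<Longrightarrow> nilpotent_r x"
proof -
  assume "x^m \<in> Jr"
  then obtain k where "(x^m)^k = 0" using J_nil unfolding nilpotent_r_def by blast
  then show ?thesis unfolding nilpotent_r_def by (metis power_mult)
qed

lemma lemC:
  assumes uu: "UU_ring TYPE('a::ring_1)" and e: "(e::'a)*e = e" and q: "nilpotent_r q"
  shows "nilpotent_r ((e+q) - (e+q)*(e+q))"
proof -
  obtain m where qm: "q^m = 0" using q unfolding nilpotent_r_def by blast
  define c where "c = e*q - q*e"
  define w where "w = 1 - 2*e - q"
  have cJ: "c \<in> Jr" unfolding c_def using lem_comm[OF uu e] .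
  have eq1: "(e+q) - (e+q)*(e+q) = w*q + c" unfolding w_def c_def
    by (simp add: algebra_simps e mult_2)
  have "w*q - q*w = (- c) + (- c)" unfolding w_def c_def by (simp add: algebra_simps mult_2)
  then have "w*q - q*w \<in> Jr" using J_add[OF uu] J_uminus cJ by metis
  from J_comm_pow[OF uu this, of m] qm have "(w*q)^m \<in> Jr" by simp
  moreover have "(w*q + c)^m - (w*q)^m \<in> Jr" using J_pow_add[OF uu cJ] .
  ultimately have "(w*q + c)^m \<in> Jr" using J_add[OF uu] by fastforce
  then show ?thesis using eq1 J_nilpow by metis
qed

lemma nil_clean_all:
  assumes uu: "UU_ring TYPE('a::ring_1)" and g: "GWNC TYPE('a)"
  shows "\<exists>e q. (e::'a)*e = e \<and> nilpotent_r q \<and> a = e + q"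
proof (cases "is_unit_r a")
  case True
  then show ?thesis using UU_nil[OF uu True] by (intro exI[of _ 1] exI[of _ "a-1"]) simp
next
  case False
  then obtain q e where qe: "nilpotent_r q" "idempotent_r e" "a = q + e \<or> a = q - e"
    using g unfolding GWNC_def by blast
  show ?thesis
  proof (cases "a = q + e")
    case True then show ?thesis using qe unfolding idempotent_r_def by (metis add.commute)
  next
    case False
    then have a: "a = q - e" using qe by blast
    obtain m where qm: "q^m = 0" using qe unfolding nilpotent_r_def by blast
    have "(q + - (2*e))^m - q^m \<in> Jr" using J_pow_add[OF uu J_uminus[OF two_J[OF uu]]] .
    then have "nilpotent_r (q - 2*e)" using qm J_nilpow by (metis diff_conv_add_uminus diff_zero)
    moreover have "a = e + (q - 2*e)" using a by (simp add: algebra_simps mult_2)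
    ultimately show ?thesis using qe unfolding idempotent_r_def by blast
  qed
qed


definition Bc :: "'a::ring_1 \<Rightarrow> 'a set" where
  "Bc a = {y. \<forall>z. z*a = a*z \<longrightarrow> z*y = y*z}"

lemma Bc_a: "a \<in> Bc a" unfolding Bc_def by auto
lemma Bc_D: "y \<in> Bc a \<Longrightarrow> z*a = a*z \<Longrightarrow> z*y = y*z" unfolding Bc_def by blast
lemma Bc_I: "(\<And>z. z*a = a*z \<Longrightarrow> z*y = y*z) \<Longrightarrow> y \<in> Bc a" unfolding Bc_def by blast
lemma Bc_comm_a: "y \<in> Bc a \<Longrightarrow> y*a = a*y" using Bc_D[of y a a] by simp
lemma Bc_comm: "y1 \<in> Bc a \<Longrightarrow> y2 \<in> Bc a \<Longrightarrow> y1*y2 = y2*y1"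
  using Bc_D Bc_comm_a by metis
lemma Bc_one: "1 \<in> Bc a" by (rule Bc_I) simp
lemma Bc_add: "y1 \<in> Bc a \<Longrightarrow> y2 \<in> Bc a \<Longrightarrow> y1 + y2 \<in> Bc a"
proof (rule Bc_I)
  fix z assume "y1 \<in> Bc a" "y2 \<in> Bc a" "z*a = a*z"
  then have "z*y1 = y1*z" "z*y2 = y2*z" using Bc_D by blast+
  then show "z*(y1+y2) = (y1+y2)*z" by (simp add: distrib_left distrib_right)
qed
lemma Bc_diff: "y1 \<in> Bc a \<Longrightarrow> y2 \<in> Bc a \<Longrightarrow> y1 - y2 \<in> Bc a"
proof (rule Bc_I)
  fix z assume "y1 \<in> Bc a" "y2 \<in> Bc a" "z*a = a*z"
  then have "z*y1 = y1*z" "z*y2 = y2*z" using Bc_D by blast+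
  then show "z*(y1-y2) = (y1-y2)*z" by (simp add: right_diff_distrib left_diff_distrib)
qed
lemma Bc_mult: "y1 \<in> Bc a \<Longrightarrow> y2 \<in> Bc a \<Longrightarrow> y1 * y2 \<in> Bc a"
proof (rule Bc_I)
  fix z assume "y1 \<in> Bc a" "y2 \<in> Bc a" "z*a = a*z"
  then have h: "z*y1 = y1*z" "z*y2 = y2*z" using Bc_D by blast+
  have "z*(y1*y2) = (z*y1)*y2" by (simp only: mult.assoc)
  also have "\<dots> = y1*(z*y2)" using h by (simp only: mult.assoc)
  also have "\<dots> = (y1*y2)*z" using h by (simp only: mult.assoc)
  finally show "z*(y1*y2) = (y1*y2)*z" .
qed
lemma zero_in_Bc: "0 \<in> Bc a" by (rule Bc_I) simp
lemma Bc_pow: "y \<in> Bc a \<Longrightarrow> y^n \<in> Bc a"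
  by (induction n) (auto simp: Bc_one Bc_mult)

lemma three: "(3::'a::ring_1) = 1 + 1 + 1" by simp
lemma m3: "(y::'a::ring_1) * 3 = y + y + y" "3 * y = y + y + y"
  by (simp_all only: three distrib_left distrib_right mult_1_right mult_1_left)

definition Nw :: "'a::ring_1 \<Rightarrow> 'a" where
  "Nw x = x*x + x*x + x*x - x*(x*x) - x*(x*x)"

lemma id1: "Nw x - Nw x * Nw x = ((x::'a::ring_1) - x*x)*(x - x*x)*(1+1+1 + (x - x*x) + (x - x*x) + (x - x*x) + (x - x*x))"
  unfolding Nw_def by (simp add: algebra_simps mult_2 mult_2_right m3)

lemma id2: "Nw x - x = ((x::'a::ring_1) - x*x)*(x + x - 1)"
  unfolding Nw_def by (simp add: algebra_simps)

lemma Nw_Bc: "x \<in> Bc a \<Longrightarrow> Nw x \<in> Bc a"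
  unfolding Nw_def by (intro Bc_diff Bc_mult Bc_add)

lemma newton_inv:
  fixes a :: "'a::ring_1"
  defines "t \<equiv> a - a*a"
  shows "(Nw ^^ k) a \<in> Bc a \<and> (\<exists>c\<in>Bc a. (Nw ^^ k) a - (Nw ^^ k) a * (Nw ^^ k) a = t^(2^k)*c)
         \<and> (\<exists>d\<in>Bc a. (Nw ^^ k) a - a = t*d)"
proof (induction k)
  case 0
  have "a - a = t*0" by simp
  moreover have "a - a*a = t^(2^0)*1" unfolding t_def by simp
  ultimately show ?case using Bc_a Bc_one by (metis funpow_0 zero_in_Bc)
next
  case (Suc k)
  define x where "x = (Nw ^^ k) a"
  have tB: "t \<in> Bc a" unfolding t_def by (intro Bc_diff Bc_mult Bc_a)
  from Suc obtain c d where xB: "x \<in> Bc a" and cB: "c \<in> Bc a" and dB: "d \<in> Bc a"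
    and hc: "x - x*x = t^(2^k)*c" and hd: "x - a = t*d" unfolding x_def by blast
  define s where "s = x - x*x"
  define T where "T = t^(2^k)"
  define W where "W = 1+1+1 + s + s + s + s"
  have sB: "s \<in> Bc a" unfolding s_def using xB by (intro Bc_diff Bc_mult)
  have TB: "T \<in> Bc a" unfolding T_def using Bc_pow tB by blast
  have cT: "c*T = T*c" using Bc_comm[OF cB TB] .
  have sT: "s = T*c" using hc unfolding s_def T_def .
  have "Nw x - Nw x * Nw x = s*s*W" unfolding s_def W_def by (rule id1)
  also have "\<dots> = T*c*(T*c)*W" using sT by simp
  also have "T*c*(T*c) = T*(c*T)*c" by (simp only: mult.assoc)
  also have "\<dots> = (T*T)*(c*c)" using cT by (simp only: mult.assoc)
  also have "T*T = t^(2^Suc k)"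
  proof -
    have "(2::nat)^Suc k = 2^k + 2^k" by simp
    then show ?thesis unfolding T_def by (simp only: power_add)
  qed
  finally have e1: "Nw x - Nw x * Nw x = t^(2^Suc k)*(c*c*W)" by (simp only: mult.assoc)
  have c1: "c*c*W \<in> Bc a" unfolding W_def using cB sB by (intro Bc_mult Bc_add Bc_one)
  obtain p where p: "(2::nat)^k = Suc p" using not0_implies_Suc by fastforce
  have Tp: "T = t*t^p" unfolding T_def p by simp
  have "Nw x - a = (Nw x - x) + (x - a)" by simp
  also have "\<dots> = s*(x+x-1) + t*d" using id2 hd s_def by simp
  also have "\<dots> = t*(t^p*c*(x+x-1)) + t*d" using sT Tp by (simp only: mult.assoc)
  also have "\<dots> = t*(t^p*c*(x+x-1) + d)" by (simp only: distrib_left)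
  finally have e2: "Nw x - a = t*(t^p*c*(x+x-1) + d)" .
  have c2: "t^p*c*(x+x-1) + d \<in> Bc a" using cB dB xB tB
    by (intro Bc_mult Bc_add Bc_diff Bc_one Bc_pow)
  have "(Nw ^^ Suc k) a = Nw x" unfolding x_def by simp
  then show ?case using e1 e2 c1 c2 Nw_Bc[OF xB] by metis
qed

lemma lift:
  fixes a :: "'a::ring_1"
  assumes "nilpotent_r (a - a*a)"
  shows "\<exists>e b. idempotent_r e \<and> nilpotent_r b \<and> a = e + b \<and> e * b = b * e"
proof -
  define t where "t = a - a*a"
  obtain m where tm: "t^m = 0" using assms unfolding nilpotent_r_def t_def by blast
  define x where "x = (Nw ^^ m) a"
  from newton_inv[of m a] obtain c d where xB: "x \<in> Bc a" and dB: "d \<in> Bc a"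
    and hc: "x - x*x = t^(2^m)*c" and hd: "x - a = t*d" unfolding x_def t_def by blast
  have "m \<le> 2^m" using less_exp[of m] by simp
  then obtain j where j: "(2::nat)^m = m + j" using le_Suc_ex by blast
  have "t^(2^m) = t^m * t^j" unfolding j by (simp only: power_add)
  then have "t^(2^m) = 0" using tm by simp
  then have idem: "idempotent_r x" using hc unfolding idempotent_r_def by simp
  have tB: "t \<in> Bc a" unfolding t_def by (intro Bc_diff Bc_mult Bc_a)
  have "nilpotent_r (t*d)" using nil_comm_mult[OF Bc_comm[OF tB dB]] assms t_def by simp
  then have "nilpotent_r (- (t*d))" by (rule nil_uminus)
  moreover have "a - x = - (t*d)" using hd by (simp add: algebra_simps)
  moreover have "a - x \<in> Bc a" using xB by (intro Bc_diff Bc_a)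
  ultimately have n1: "nilpotent_r (a-x)" and bB: "a - x \<in> Bc a" by simp_all
  have c1: "x*(a-x) = (a-x)*x" using Bc_comm[OF xB bB] .
  have "a = x + (a - x)" by simp
  then show ?thesis using idem n1 c1 by blast
qed

lemma sncl_to:
  assumes "strongly_nil_clean TYPE('a::ring_1)"
  shows "GWNC TYPE('a) \<and> UU_ring TYPE('a)"
proof
  show "GWNC TYPE('a)" unfolding GWNC_def
  proof (intro allI impI)
    fix a :: 'a
    obtain e b where "idempotent_r e" "nilpotent_r b" "a = e + b"
      using assms unfolding strongly_nil_clean_def by blast
    then show "\<exists>q e. nilpotent_r q \<and> idempotent_r e \<and> (a = q + e \<or> a = q - e)"
      by (metis add.commute)
  qed
  show "UU_ring TYPE('a)" unfolding UU_ring_def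
  proof (intro allI impI)
    fix u :: 'a assume "is_unit_r u"
    then obtain v where v: "u*v = 1" "v*u = 1" unfolding is_unit_r_def by blast
    obtain e b where eb: "e*e = e" "nilpotent_r b" "u = e + b" "e*b = b*e"
      using assms unfolding strongly_nil_clean_def idempotent_r_def by blast
    have ub: "u*b = b*u" using eb by (simp add: distrib_left distrib_right)
    have vb: "v*b = b*v" using inv_comm[OF v ub] .
    have "nilpotent_r (b*v)" using nil_comm_mult[of b v] vb eb by simp
    then have "nilpotent_r (- (v*b))" using vb nil_uminus by simp
    then have "is_unit_r (1 - v*b)" using one_plus_nil_unit by fastforce
    moreover have "e = u*(1 - v*b)"
    proof -
      have "u*(1 - v*b) = u - (u*v)*b" by (simp add: right_diff_distrib mult.assoc)
      then show ?thesis using eb v by simp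
    qed
    ultimately have "is_unit_r e" using unit_mult \<open>is_unit_r u\<close> by metis
    then obtain g where "e*g = 1" unfolding is_unit_r_def by blast
    then have "e = e*(e*g)" by simp
    also have "\<dots> = (e*e)*g" by (simp only: mult.assoc)
    also have "\<dots> = 1" using eb \<open>e*g = 1\<close> by simp
    finally have "e = 1" .
    then show "nilpotent_r (u - 1)" using eb by simp
  qed
qed

theorem lemma2p30:
  shows "strongly_nil_clean TYPE('a::ring_1) \<longleftrightarrow>
         (GWNC TYPE('a) \<and> UU_ring TYPE('a))"
proof
  assume "strongly_nil_clean TYPE('a::ring_1)"
  then show "GWNC TYPE('a) \<and> UU_ring TYPE('a)" by (rule sncl_to)
next
  assume h: "GWNC TYPE('a) \<and> UU_ring TYPE('a)"
  show "strongly_nil_clean TYPE('a::ring_1)" unfolding strongly_nil_clean_def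
  proof
    fix a :: 'a
    obtain e q where "e*e = e" "nilpotent_r q" "a = e + q"
      using nil_clean_all h by blast
    then have "nilpotent_r (a - a*a)" using lemC h by blast
    then show "\<exists>e b. idempotent_r e \<and> nilpotent_r b \<and> a = e + b \<and> e * b = b * e" by (rule lift)
  qed
qed

end
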